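(* Let $I$ be a connected and locally connected topological space and $h:I\to\mathbb{R}$ a positive continuous function attaining its lower bound at $v\in I$. Let $x\in I$ and $\lambda\in[h(v),h(x)]$. Then there is $y\in C_{x,\lambda}$ with $h(y)=\lambda$.
   Context: For $x\in I$ and $\lambda\le h(x)$, $C_{x,\lambda}$ denotes the maximal connected subset of $\{y\in I: h(y)\ge\lambda\}$ containing $x$. *)

theory Defs
  imports "HOL-Analysis.Analysis"
begin

definition superlevel_component ::
  "'a topology \<Rightarrow> ('a \<Rightarrow> real) \<Rightarrow> 'a \<Rightarrow> real \<Rightarrow> 'a set" where
  "superlevel_component X h x lam =
     connected_component_of_set (subtopology X {y \<in> topspace X. h y \<ge> lam}) x"

end

theory Submission
  imports Defs
begin

theorem mainTheorem5:
  fixes X :: "'a topology" and h :: "'a \<Rightarrow> real" and v x :: 'a and lam :: real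
  assumes "connected_space X"
    and "locally_connected_space X"
    and "continuous_map X euclideanreal h"
    and "\<forall>y\<in>topspace X. h y > 0"
    and "v \<in> topspace X"
    and "\<forall>y\<in>topspace X. h v \<le> h y"
    and "x \<in> topspace X"
    and "h v \<le> lam" and "lam \<le> h x"
  shows "\<exists>y\<in>superlevel_component X h x lam. h y = lam"
proof (rule ccontr)
  assume nc: "\<not> ?thesis"
  define S where "S = {y \<in> topspace X. h y \<ge> lam}"
  define T where "T = {y \<in> topspace X. h y > lam}"
  define C where "C = connected_component_of_set (subtopology X S) x"
  have CS: "C = superlevel_component X h x lam"
    unfolding C_def S_def superlevel_component_def by simp
  have xS: "x \<in> S" using assms S_def by auto
  have xC: "x \<in> C" unfolding C_def using xS S_def
    by (auto simp add: connected_component_of_refl)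
  have CsubS: "C \<subseteq> S" unfolding C_def
    using connected_component_of_subset_topspace[of "subtopology X S" x] S_def by auto
  have CT: "C \<subseteq> T" using nc CsubS CS unfolding S_def T_def by force
  have TS: "T \<subseteq> S" unfolding S_def T_def by auto
  have Ccon: "connectedin X C"
    using connectedin_connected_component_of[of "subtopology X S" x]
    unfolding C_def by (simp add: connectedin_subtopology)
  define D where "D = connected_component_of_set (subtopology X T) x"
  have xT: "x \<in> T" using xC CT by auto
  have "C \<subseteq> D" unfolding D_def
    by (rule connected_component_of_maximal) (use Ccon CT xC in \<open>auto simp: connectedin_subtopology\<close>)
  moreover have "D \<subseteq> C"
  proof -
    have "connectedin X D \<and> D \<subseteq> T"
      using connectedin_connected_component_of[of "subtopology X T" x]
      unfolding D_def by (simp add: connectedin_subtopology)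
    then have "connectedin (subtopology X S) D" using TS
      by (auto simp: connectedin_subtopology)
    moreover have "x \<in> D" unfolding D_def using xT T_def
      by (auto simp add: connected_component_of_refl)
    ultimately show ?thesis unfolding C_def by (rule connected_component_of_maximal)
  qed
  ultimately have CD: "C = D" by auto
  have Topen: "openin X T"
  proof -
    have "openin X {y \<in> topspace X. h y \<in> {lam<..}}"
      using openin_continuous_map_preimage[OF assms(3), of "{lam<..}"] by simp
    then show ?thesis unfolding T_def by simp
  qed
  have Copen: "openin X C"
    using assms(2) Topen xT unfolding CD D_def
    by (simp add: locally_connected_space_eq_open_connected_component_of)
  have Sclosed: "closedin X S"
  proof -
    have "closedin X {y \<in> topspace X. h y \<in> {lam..}}"
      using closedin_continuous_map_preimage[OF assms(3), of "{lam..}"] by simp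
    then show ?thesis unfolding S_def by simp
  qed
  have Cclosed: "closedin X C"
    using closedin_trans_full[OF closedin_connected_component_of Sclosed] unfolding C_def .
  have "C = topspace X"
    using assms(1) Copen Cclosed xC unfolding connected_space_clopen_in by blast
  then have "v \<in> T" using CT assms(5) by auto
  then show False using assms(8) unfolding T_def by auto
qed

end
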